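(* The total domination polynomials of the following graphs are unimodal: the helm graph $H_n$ ($n\ge 3$); the generalized helm graph $H_{n,m}$ ($n\ge 3$, $m\ge 1$); the graph $H(3)$ for every graph $H$; and every sunlike graph $G(v_1^{k_1},\dots,v_n^{k_n})$ with $k_1,\dots,k_n\ge 1$.
   Context: The wheel $W_n$ ($n\ge3$) is the cycle $C_n$ together with one extra vertex (hub) adjacent to all cycle vertices. The helm $H_n$ is obtained from $W_n$ by attaching one pendant edge at each vertex of the $n$-cycle; the generalized helm $H_{n,m}$ is obtained from $W_n$ by attaching $m$ pendant edges at each vertex of the $n$-cycle. For a graph $H$, $H(3)$ is obtained by identifying each vertex of $H$ with an end vertex of its own copy of the path $P_3$. For a graph $G$ with vertices $v_1,\dots,v_n$ and positive integers $k_i$, the sunlike graph $G(v_1^{k_1},\dots,v_n^{k_n})$ is obtained by attaching $k_i$ new pendant vertices to $v_i$ for each $i$. For a finite simple graph $G=(V,E)$, a set $D\subseteq V$ is a total dominating set if every vertex of $V$ is adjacent to some vertex of $D$; $d_t(G,i)$ is the number of total dominating sets of size $i$, and $D_t(G,x)=\sum_{i} d_t(G,i)x^i$. A polynomial $\sum a_ix^i$ is unimodal if $a_0\le\dots\le a_k\ge a_{k+1}\ge\dots\ge a_N$ for some $k$. *)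

theory Defs
  imports "HOL-Computational_Algebra.Polynomial"
begin

definition simple_graph :: "'a set \<Rightarrow> ('a \<Rightarrow> 'a \<Rightarrow> bool) \<Rightarrow> bool" where
  "simple_graph V adj \<longleftrightarrow> finite V \<and>
     (\<forall>u v. adj u v \<longrightarrow> u \<in> V \<and> v \<in> V \<and> u \<noteq> v \<and> adj v u)"

definition total_dominating :: "'a set \<Rightarrow> ('a \<Rightarrow> 'a \<Rightarrow> bool) \<Rightarrow> 'a set \<Rightarrow> bool" where
  "total_dominating V adj D \<longleftrightarrow> D \<subseteq> V \<and> (\<forall>v\<in>V. \<exists>u\<in>D. adj v u)"

definition d_t :: "'a set \<Rightarrow> ('a \<Rightarrow> 'a \<Rightarrow> bool) \<Rightarrow> nat \<Rightarrow> nat" where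
  "d_t V adj i = card {D. total_dominating V adj D \<and> card D = i}"

definition total_dom_poly :: "'a set \<Rightarrow> ('a \<Rightarrow> 'a \<Rightarrow> bool) \<Rightarrow> nat poly" where
  "total_dom_poly V adj = (\<Sum>i\<le>card V. monom (d_t V adj i) i)"

definition unimodal :: "'b::{zero,linorder} poly \<Rightarrow> bool" where
  "unimodal p \<longleftrightarrow> (\<exists>k\<le>degree p.
      (\<forall>i<k. coeff p i \<le> coeff p (Suc i)) \<and>
      (\<forall>i. k \<le> i \<and> i < degree p \<longrightarrow> coeff p (Suc i) \<le> coeff p i))"

datatype helm_vertex = Hub | Rim nat | Pend nat nat

text \<open>Rim i (i < n) are the cycle vertices, Pend i j (j < m) the pendant
vertices attached at Rim i.\<close>

definition gen_helm_V :: "nat \<Rightarrow> nat \<Rightarrow> helm_vertex set" where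
  "gen_helm_V n m = {Hub} \<union> Rim ` {..<n} \<union> {Pend i j | i j. i < n \<and> j < m}"

fun gen_helm_adj :: "nat \<Rightarrow> nat \<Rightarrow> helm_vertex \<Rightarrow> helm_vertex \<Rightarrow> bool" where
  "gen_helm_adj n m Hub (Rim i) = (i < n)"
| "gen_helm_adj n m (Rim i) Hub = (i < n)"
| "gen_helm_adj n m (Rim i) (Rim j) = (i < n \<and> j < n \<and> (j = Suc i mod n \<or> i = Suc j mod n))"
| "gen_helm_adj n m (Rim i) (Pend i' j) = (i = i' \<and> i < n \<and> j < m)"
| "gen_helm_adj n m (Pend i' j) (Rim i) = (i = i' \<and> i < n \<and> j < m)"
| "gen_helm_adj n m _ _ = False"

definition helm_V :: "nat \<Rightarrow> helm_vertex set" where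
  "helm_V n = {Hub} \<union> Rim ` {..<n} \<union> {Pend i 0 | i. i < n}"

fun helm_adj :: "nat \<Rightarrow> helm_vertex \<Rightarrow> helm_vertex \<Rightarrow> bool" where
  "helm_adj n Hub (Rim i) = (i < n)"
| "helm_adj n (Rim i) Hub = (i < n)"
| "helm_adj n (Rim i) (Rim j) = (i < n \<and> j < n \<and> (j = Suc i mod n \<or> i = Suc j mod n))"
| "helm_adj n (Rim i) (Pend i' j) = (i = i' \<and> i < n \<and> j = 0)"
| "helm_adj n (Pend i' j) (Rim i) = (i = i' \<and> i < n \<and> j = 0)"
| "helm_adj n _ _ = False"

text \<open>Vertex (v,0) is v itself; (v,1),(v,2) are the other two path vertices,
with path v - (v,1) - (v,2).\<close>

definition P3_V :: "'a set \<Rightarrow> ('a \<times> nat) set" where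
  "P3_V V = V \<times> {0, 1, 2}"

definition P3_adj :: "'a set \<Rightarrow> ('a \<Rightarrow> 'a \<Rightarrow> bool) \<Rightarrow> 'a \<times> nat \<Rightarrow> 'a \<times> nat \<Rightarrow> bool" where
  "P3_adj V adj x y \<longleftrightarrow>
     (snd x = 0 \<and> snd y = 0 \<and> adj (fst x) (fst y)) \<or>
     (fst x = fst y \<and> fst x \<in> V \<and>
        ((snd x = 0 \<and> snd y = 1) \<or> (snd x = 1 \<and> snd y = 0) \<or>
         (snd x = 1 \<and> snd y = 2) \<or> (snd x = 2 \<and> snd y = 1)))"

text \<open>Inl v is the original vertex v; Inr (v,j), j < k v, are the pendants at v.\<close>

definition sunlike_V :: "'a set \<Rightarrow> ('a \<Rightarrow> nat) \<Rightarrow> ('a + 'a \<times> nat) set" where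
  "sunlike_V V k = Inl ` V \<union> Inr ` {(v, j) | v j. v \<in> V \<and> j < k v}"

fun sunlike_adj :: "'a set \<Rightarrow> ('a \<Rightarrow> 'a \<Rightarrow> bool) \<Rightarrow> ('a \<Rightarrow> nat) \<Rightarrow>
    'a + 'a \<times> nat \<Rightarrow> 'a + 'a \<times> nat \<Rightarrow> bool" where
  "sunlike_adj V adj k (Inl u) (Inl v) = adj u v"
| "sunlike_adj V adj k (Inl u) (Inr (v, j)) = (u = v \<and> v \<in> V \<and> j < k v)"
| "sunlike_adj V adj k (Inr (v, j)) (Inl u) = (u = v \<and> v \<in> V \<and> j < k v)"
| "sunlike_adj V adj k (Inr _) (Inr _) = False"

end

theory Submission
  imports Defs
begin


definition tp2 :: "(nat \<Rightarrow> real) \<Rightarrow> bool" where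
  "tp2 f \<longleftrightarrow> (\<forall>i. 0 \<le> f i) \<and> (\<forall>i j. i \<le> j \<longrightarrow> f i * f (j+2) \<le> f (i+1) * f (j+1))"

lemma tp2_step:
  assumes "tp2 f" "u + d + d \<le> v"
  shows "f u * f v \<le> f (u+d) * f (v-d)"
  using assms(2)
proof (induction d)
  case 0 then show ?case by simp
next
  case (Suc d)
  have IH: "f u * f v \<le> f (u+d) * f (v-d)" using Suc by simp
  have "f (u+d) * f ((v-d-2)+2) \<le> f (u+d+1) * f ((v-d-2)+1)"
    using assms(1) Suc.prems unfolding tp2_def by auto
  moreover have "(v-d-2)+2 = v - d" "(v-d-2)+1 = v - Suc d" using Suc.prems by auto
  ultimately show ?case using IH by simp
qed

lemma tp2_gen:
  assumes "tp2 f" "x < p" "x < q" "p + q = x + y"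
  shows "f x * f y \<le> f p * f q"
proof (cases "p \<le> q")
  case True
  have "f x * f y \<le> f (x + (p-x)) * f (y - (p-x))"
    by (rule tp2_step[OF assms(1)]) (use assms True in auto)
  moreover have "x + (p-x) = p" "y - (p-x) = q" using assms True by auto
  ultimately show ?thesis by simp
next
  case False
  have "f x * f y \<le> f (x + (q-x)) * f (y - (q-x))"
    by (rule tp2_step[OF assms(1)]) (use assms False in auto)
  moreover have "x + (q-x) = q" "y - (q-x) = p" using assms False by auto
  ultimately show ?thesis by (simp add: mult.commute)
qed

lemma tp2_nonneg: "tp2 f \<Longrightarrow> 0 \<le> f i" unfolding tp2_def by auto

lemma tp2_unimodal:
  fixes p :: "nat poly"
  assumes "tp2 (\<lambda>i. real (coeff p i))"
  shows "unimodal p"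
proof -
  define f where "f = (\<lambda>i. real (coeff p i))"
  have tf: "tp2 f" using assms f_def by simp
  have nn: "\<And>i. 0 \<le> f i" using tp2_nonneg[OF tf] .
  obtain k where k: "k \<le> degree p" "\<And>i. i \<le> degree p \<Longrightarrow> f i \<le> f k"
  proof -
    have "finite (f ` {..degree p})" "f ` {..degree p} \<noteq> {}" by auto
    then have "Max (f ` {..degree p}) \<in> f ` {..degree p}" by (rule Max_in)
    then obtain k where "k \<le> degree p" "f k = Max (f ` {..degree p})" by (metis atMost_iff imageE)
    then show ?thesis using that by (metis Max_ge atMost_iff finite_atMost finite_imageI image_eqI)
  qed
  have c1: "f i \<le> f (Suc i)" if "i < k" for i
  proof (rule ccontr)
    assume "\<not> ?thesis"
    then have lt: "f (Suc i) < f i" by simp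
    show False
    proof (cases "Suc i = k")
      case True then show False using lt k(2)[of i] k(1) that by auto
    next
      case False
      then have "Suc i < k" using that by simp
      have "f i * f k \<le> f (Suc i) * f (k-1)"
        by (rule tp2_gen[OF tf]) (use \<open>Suc i < k\<close> in auto)
      also have "\<dots> \<le> f (Suc i) * f k"
        using k nn by (intro mult_left_mono) auto
      also have "\<dots> < f i * f k"
      proof -
        have "f k > 0" using k(2)[of i] k(1) that lt nn[of "Suc i"] by auto
        then show ?thesis using lt by simp
      qed
      finally show False by simp
    qed
  qed
  have c2: "f (Suc i) \<le> f i" if "k \<le> i" "i < degree p" for i
  proof (rule ccontr)
    assume "\<not> ?thesis"
    then have lt: "f i < f (Suc i)" by simp
    show False
    proof (cases "i = k")
      case True then show False using lt k(2)[of "Suc i"] that by auto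
    next
      case False
      then have "k < i" using that by simp
      have "f k * f (Suc i) \<le> f (Suc k) * f i"
        by (rule tp2_gen[OF tf]) (use \<open>k < i\<close> in auto)
      also have "\<dots> \<le> f k * f i"
        using k that nn by (intro mult_right_mono) auto
      also have "\<dots> < f k * f (Suc i)"
      proof -
        have "f k > 0" using k(2)[of "Suc i"] that lt nn[of i] by auto
        then show ?thesis using lt by simp
      qed
      finally show False by simp
    qed
  qed
  show ?thesis unfolding unimodal_def
    using k(1) c1 c2 unfolding f_def by (intro exI[of _ k]) auto
qed



lemma cb2:
  fixes a b c d :: "nat \<Rightarrow> real"
  shows "(\<Sum>t<N. a t * b t) * (\<Sum>t<N. c t * d t) - (\<Sum>t<N. a t * d t) * (\<Sum>t<N. c t * b t)
       = (\<Sum>t<N. \<Sum>u\<in>{Suc t..<N}. (a t * c u - a u * c t) * (b t * d u - b u * d t))"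
proof (induction N)
  case 0 then show ?case by simp
next
  case (Suc N)
  have e: "(\<Sum>t<Suc N. \<Sum>u\<in>{Suc t..<Suc N}. (a t * c u - a u * c t) * (b t * d u - b u * d t))
     = (\<Sum>t<N. \<Sum>u\<in>{Suc t..<N}. (a t * c u - a u * c t) * (b t * d u - b u * d t))
       + (\<Sum>t<N. (a t * c N - a N * c t) * (b t * d N - b N * d t))"
  proof -
    have "(\<Sum>t<Suc N. \<Sum>u\<in>{Suc t..<Suc N}. (a t * c u - a u * c t) * (b t * d u - b u * d t))
      = (\<Sum>t<N. \<Sum>u\<in>{Suc t..<Suc N}. (a t * c u - a u * c t) * (b t * d u - b u * d t))"
      by simp
    also have "\<dots> = (\<Sum>t<N. (\<Sum>u\<in>{Suc t..<N}. (a t * c u - a u * c t) * (b t * d u - b u * d t))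
       + (a t * c N - a N * c t) * (b t * d N - b N * d t))"
      by (intro sum.cong) auto
    finally show ?thesis by (simp add: sum.distrib)
  qed
  have f: "(\<Sum>t<N. (a t * c N - a N * c t) * (b t * d N - b N * d t))
     = c N * d N * (\<Sum>t<N. a t * b t) - c N * b N * (\<Sum>t<N. a t * d t)
       - a N * d N * (\<Sum>t<N. c t * b t) + a N * b N * (\<Sum>t<N. c t * d t)"
    by (simp add: sum_distrib_left sum_subtractf sum.distrib algebra_simps)
  show ?case using Suc.IH unfolding e f by (simp add: algebra_simps)
qed

definition conv :: "(nat \<Rightarrow> real) \<Rightarrow> (nat \<Rightarrow> real) \<Rightarrow> nat \<Rightarrow> real" where
  "conv f g n = (\<Sum>k\<le>n. f k * g (n-k))"

lemma conv_ext:
  fixes h g :: "nat \<Rightarrow> real" and m N :: nat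
  assumes "m \<le> N"
  shows "(\<Sum>t\<le>N. h t * (if t \<le> m then g (m - t) else 0)) = (\<Sum>t\<le>m. h t * g (m-t))"
proof -
  have "(\<Sum>t\<le>N. h t * (if t \<le> m then g (m - t) else 0)) = (\<Sum>t\<le>m. h t * (if t \<le> m then g (m - t) else 0))"
    by (rule sum.mono_neutral_right) (use assms in auto)
  also have "\<dots> = (\<Sum>t\<le>m. h t * g (m-t))" by (intro sum.cong) auto
  finally show ?thesis .
qed

lemma tp2_conv:
  assumes tf: "tp2 f" and tg: "tp2 g"
  shows "tp2 (conv f g)"
proof -
  have nf: "\<And>i. 0 \<le> f i" and ng: "\<And>i. 0 \<le> g i" using tf tg tp2_nonneg by auto
  have nn: "0 \<le> conv f g n" for n unfolding conv_def using nf ng by (intro sum_nonneg mult_nonneg_nonneg) auto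
  have main: "conv f g i * conv f g (j+2) \<le> conv f g (i+1) * conv f g (j+1)" if ij: "i \<le> j" for i j
  proof -
    define N where "N = Suc (Suc (Suc j))"
    define A1 where "A1 = (\<lambda>t. f t)"
    define A2 where "A2 = (\<lambda>t. if t = 0 then 0 else f (t-1))"
    define B1 where "B1 = (\<lambda>t. if t \<le> i+1 then g (i+1-t) else 0)"
    define B2 where "B2 = (\<lambda>t. if t \<le> j+2 then g (j+2-t) else 0)"
    have lN: "{..<N} = {..j+2}" unfolding N_def by auto
    have s1: "(\<Sum>t<N. A1 t * B1 t) = conv f g (i+1)"
      unfolding lN A1_def B1_def conv_def using ij by (intro conv_ext) auto
    have s4: "(\<Sum>t<N. A1 t * B2 t) = conv f g (j+2)"
      unfolding lN A1_def B2_def conv_def by (intro conv_ext) auto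
    have s2: "(\<Sum>t<N. A2 t * B2 t) = conv f g (j+1)"
    proof -
      have "(\<Sum>t<N. A2 t * B2 t) = (\<Sum>t\<le>Suc (j+1). A2 t * B2 t)" unfolding lN by simp
      also have "\<dots> = (\<Sum>t\<le>j+1. A2 (Suc t) * B2 (Suc t))"
        by (subst sum.atMost_Suc_shift) (simp add: A2_def)
      also have "\<dots> = conv f g (j+1)" unfolding conv_def A2_def B2_def
        by (intro sum.cong) auto
      finally show ?thesis .
    qed
    have s3: "(\<Sum>t<N. A2 t * B1 t) = conv f g i"
    proof -
      have "(\<Sum>t<N. A2 t * B1 t) = (\<Sum>t\<le>Suc (j+1). A2 t * B1 t)" unfolding lN by simp
      also have "\<dots> = (\<Sum>t\<le>j+1. A2 (Suc t) * B1 (Suc t))"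
        by (subst sum.atMost_Suc_shift) (simp add: A2_def)
      also have "\<dots> = (\<Sum>t\<le>j+1. f t * (if t \<le> i then g (i - t) else 0))"
        unfolding A2_def B1_def by (intro sum.cong) auto
      also have "\<dots> = conv f g i" unfolding conv_def using ij by (intro conv_ext) auto
      finally show ?thesis .
    qed
    have termnn: "0 \<le> (A1 t * A2 u - A1 u * A2 t) * (B1 t * B2 u - B1 u * B2 t)"
      if tu: "t < u" "u < N" for t u
    proof (rule mult_nonneg_nonneg)
      show "0 \<le> A1 t * A2 u - A1 u * A2 t"
      proof (cases "t = 0")
        case True then show ?thesis using tu nf unfolding A1_def A2_def by simp
      next
        case False
        have "f (t-1) * f u \<le> f t * f (u-1)"
          by (rule tp2_gen[OF tf]) (use tu False in auto)
        then show ?thesis using tu False unfolding A1_def A2_def by (simp add: mult.commute)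
      qed
      show "0 \<le> B1 t * B2 u - B1 u * B2 t"
      proof (cases "u \<le> i+1")
        case False
        then show ?thesis using tu ng unfolding B1_def B2_def N_def by simp
      next
        case True
        have "g (i+1-u) * g (j+2-t) \<le> g (i+1-t) * g (j+2-u)"
          by (rule tp2_gen[OF tg]) (use tu True ij in \<open>auto simp: N_def\<close>)
        then show ?thesis using tu True ij unfolding B1_def B2_def N_def by (simp add: mult.commute)
      qed
    qed
    have "0 \<le> (\<Sum>t<N. \<Sum>u\<in>{Suc t..<N}. (A1 t * A2 u - A1 u * A2 t) * (B1 t * B2 u - B1 u * B2 t))"
      using termnn by (intro sum_nonneg) auto
    also have "\<dots> = conv f g (i+1) * conv f g (j+1) - conv f g (j+2) * conv f g i"
      using cb2[of A1 B1 N A2 B2] s1 s2 s3 s4 by simp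
    finally show ?thesis by (simp add: mult.commute)
  qed
  show ?thesis unfolding tp2_def using nn main by auto
qed

lemma tp2_mult:
  fixes p q :: "real poly"
  assumes "tp2 (coeff p)" "tp2 (coeff q)"
  shows "tp2 (coeff (p * q))"
proof -
  have "coeff (p * q) = conv (coeff p) (coeff q)"
    by (rule ext) (simp add: coeff_mult conv_def)
  then show ?thesis using tp2_conv[OF assms] by simp
qed

lemma tp2_one: "tp2 (coeff (1::real poly))"
  unfolding tp2_def by (auto simp: coeff_1)

lemma tp2_prod:
  fixes p :: "'i \<Rightarrow> real poly"
  assumes "finite I" "\<And>i. i \<in> I \<Longrightarrow> tp2 (coeff (p i))"
  shows "tp2 (coeff (\<Prod>i\<in>I. p i))"
  using assms by (induction I rule: finite_induct) (auto intro: tp2_mult tp2_one)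

lemma tp2_small: "(\<And>i. 0 \<le> f i) \<Longrightarrow> (\<And>i. i \<ge> 2 \<Longrightarrow> f i = 0) \<Longrightarrow> tp2 f"
  unfolding tp2_def by auto

lemma tp2_zero_low:
  assumes "tp2 f" "\<And>i. i < r \<Longrightarrow> f i = 0"
  shows "tp2 (\<lambda>i. if i = r then 0 else f i)"
  unfolding tp2_def
proof (intro conjI allI impI)
  fix i show "0 \<le> (if i = r then 0 else f i)" using tp2_nonneg[OF assms(1)] by simp
next
  fix i j :: nat assume ij: "i \<le> j"
  have nf: "\<And>i. 0 \<le> f i" using tp2_nonneg[OF assms(1)] by simp
  show "(if i = r then 0 else f i) * (if j + 2 = r then 0 else f (j + 2))
         \<le> (if i + 1 = r then 0 else f (i + 1)) * (if j + 1 = r then 0 else f (j + 1))"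
  proof (cases "i \<le> r")
    case True
    then have "(if i = r then 0 else f i) = 0" using assms(2) by auto
    then show ?thesis using nf by (simp add: mult_nonneg_nonneg)
  next
    case False
    then show ?thesis using assms(1) ij unfolding tp2_def by auto
  qed
qed



definition gf :: "'a set set \<Rightarrow> real poly" where
  "gf F = (\<Sum>X\<in>F. monom 1 (card X))"

lemma coeff_gf:
  assumes "finite F"
  shows "coeff (gf F) j = real (card {X\<in>F. card X = j})"
proof -
  have "coeff (gf F) j = (\<Sum>X\<in>F. if card X = j then 1 else 0)"
    unfolding gf_def by (simp add: coeff_sum coeff_monom)
  also have "\<dots> = real (card {X\<in>F. card X = j})"
    using assms by (simp add: sum.If_cases Int_def)
  finally show ?thesis .
qed

lemma tp2_gf_small:
  assumes "finite F" "\<And>X. X \<in> F \<Longrightarrow> card X \<le> 1"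
  shows "tp2 (coeff (gf F))"
proof (rule tp2_small)
  fix i show "0 \<le> coeff (gf F) i" using coeff_gf[OF assms(1)] by simp
next
  fix i :: nat assume "2 \<le> i"
  then have e: "{X\<in>F. card X = i} = {}" using assms(2) by fastforce
  show "coeff (gf F) i = 0" unfolding coeff_gf[OF assms(1)] e by simp
qed

lemma gf_union_prod:
  assumes fU: "finite U" and fW: "finite W" and d: "U \<inter> W = {}"
    and FU: "F \<subseteq> Pow U" and GW: "G \<subseteq> Pow W"
  shows "gf {A \<union> B | A B. A \<in> F \<and> B \<in> G} = gf F * gf G"
proof -
  have eq: "{A \<union> B | A B. A \<in> F \<and> B \<in> G} = (\<lambda>(A,B). A \<union> B) ` (F \<times> G)" by auto
  have inj: "inj_on (\<lambda>(A,B). A \<union> B) (F \<times> G)"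
  proof (rule inj_onI, clarify)
    fix A B A' B' assume h: "A \<in> F" "B \<in> G" "A' \<in> F" "B' \<in> G" "A \<union> B = A' \<union> B'"
    have "A = (A \<union> B) \<inter> U" "A' = (A' \<union> B') \<inter> U" "B = (A \<union> B) \<inter> W" "B' = (A' \<union> B') \<inter> W"
      using h FU GW d by blast+
    then show "A = A' \<and> B = B'" using h(5) by metis
  qed
  have fF: "finite F" using FU fU by (meson finite_Pow_iff rev_finite_subset)
  have fG: "finite G" using GW fW by (meson finite_Pow_iff rev_finite_subset)
  have "gf {A \<union> B | A B. A \<in> F \<and> B \<in> G} = (\<Sum>(A,B)\<in>F\<times>G. monom 1 (card (A \<union> B)))"
    unfolding gf_def eq by (subst sum.reindex[OF inj]) (simp add: case_prod_unfold)
  also have "\<dots> = (\<Sum>(A,B)\<in>F\<times>G. monom 1 (card A) * monom 1 (card B))"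
  proof (intro sum.cong refl, clarify)
    fix A B assume h: "A \<in> F" "B \<in> G"
    have "A \<subseteq> U" "B \<subseteq> W" using h FU GW by auto
    then have "card (A \<union> B) = card A + card B"
      using fU fW d by (intro card_Un_disjoint) (auto intro: finite_subset)
    then show "monom 1 (card (A \<union> B)) = monom (1::real) (card A) * monom 1 (card B)"
      by (simp add: mult_monom)
  qed
  also have "\<dots> = gf F * gf G"
    unfolding gf_def by (simp add: sum_product sum.cartesian_product)
  finally show ?thesis .
qed

lemma gf_blocks:
  assumes "finite I" "\<And>i. i \<in> I \<Longrightarrow> finite (U i)"
    "\<And>i j. i \<in> I \<Longrightarrow> j \<in> I \<Longrightarrow> i \<noteq> j \<Longrightarrow> U i \<inter> U j = {}"
    "\<And>i. i \<in> I \<Longrightarrow> F i \<subseteq> Pow (U i)"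
  shows "gf {D. D \<subseteq> (\<Union>i\<in>I. U i) \<and> (\<forall>i\<in>I. D \<inter> U i \<in> F i)} = (\<Prod>i\<in>I. gf (F i))"
  using assms
proof (induction I rule: finite_induct)
  case empty
  have "{D. D \<subseteq> (\<Union>i\<in>{}. U i) \<and> (\<forall>i\<in>{}. D \<inter> U i \<in> F i)} = {{}}" by auto
  then show ?case by (simp add: gf_def)
next
  case (insert a I)
  define R where "R = {D. D \<subseteq> (\<Union>i\<in>I. U i) \<and> (\<forall>i\<in>I. D \<inter> U i \<in> F i)}"
  have IH: "gf R = (\<Prod>i\<in>I. gf (F i))" unfolding R_def
    using insert.IH insert.prems by auto
  have dis: "U a \<inter> (\<Union>i\<in>I. U i) = {}" using insert.prems(2) insert.hyps(2) by fastforce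
  have Fa: "F a \<subseteq> Pow (U a)" using insert.prems by auto
  have set: "{D. D \<subseteq> (\<Union>i\<in>insert a I. U i) \<and> (\<forall>i\<in>insert a I. D \<inter> U i \<in> F i)}
      = {A \<union> B | A B. A \<in> F a \<and> B \<in> R}"
  proof (intro set_eqI iffI)
    fix D assume D: "D \<in> {D. D \<subseteq> (\<Union>i\<in>insert a I. U i) \<and> (\<forall>i\<in>insert a I. D \<inter> U i \<in> F i)}"
    have "D \<inter> (\<Union>i\<in>I. U i) \<in> R"
    proof -
      have "D \<inter> (\<Union>i\<in>I. U i) \<inter> U i = D \<inter> U i" if "i \<in> I" for i using that by blast
      then show ?thesis using D unfolding R_def by auto
    qed
    moreover have "D = (D \<inter> U a) \<union> (D \<inter> (\<Union>i\<in>I. U i))" using D by blast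
    ultimately show "D \<in> {A \<union> B | A B. A \<in> F a \<and> B \<in> R}" using D by blast
  next
    fix D assume "D \<in> {A \<union> B | A B. A \<in> F a \<and> B \<in> R}"
    then obtain A B where AB: "D = A \<union> B" "A \<in> F a" "B \<in> R" by blast
    have AU: "A \<subseteq> U a" using AB Fa by auto
    have BW: "B \<subseteq> (\<Union>i\<in>I. U i)" "\<forall>i\<in>I. B \<inter> U i \<in> F i" using AB unfolding R_def by auto
    have "D \<inter> U a = A" using AU BW dis AB(1) by blast
    moreover have "D \<inter> U i = B \<inter> U i" if "i \<in> I" for i
    proof -
      have "U a \<inter> U i = {}" using insert.prems(2) insert.hyps(2) that by (metis insertCI)
      then show ?thesis using AU AB(1) by blast
    qed
    ultimately show "D \<in> {D. D \<subseteq> (\<Union>i\<in>insert a I. U i) \<and> (\<forall>i\<in>insert a I. D \<inter> U i \<in> F i)}"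
      using AB AU BW by auto
  qed
  have "gf {A \<union> B | A B. A \<in> F a \<and> B \<in> R} = gf (F a) * gf R"
    by (rule gf_union_prod[where U="U a" and W="\<Union>i\<in>I. U i"])
       (use insert.prems insert.hyps dis in \<open>auto simp: R_def\<close>)
  then show ?case using set IH insert.hyps by simp
qed

lemma tp2_sandwich:
  assumes "finite V" "R \<subseteq> V"
  shows "tp2 (coeff (gf {D. R \<subseteq> D \<and> D \<subseteq> V}))"
proof -
  define F where "F = (\<lambda>x::'a. if x \<in> R then {{x}} else {{},{x}})"
  have "{D. R \<subseteq> D \<and> D \<subseteq> V} = {D. D \<subseteq> (\<Union>x\<in>V. {x}) \<and> (\<forall>x\<in>V. D \<inter> {x} \<in> F x)}"
    unfolding F_def using assms(2) by auto
  also have "gf \<dots> = (\<Prod>x\<in>V. gf (F x))"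
    by (rule gf_blocks) (use assms in \<open>auto simp: F_def\<close>)
  finally have e: "gf {D. R \<subseteq> D \<and> D \<subseteq> V} = (\<Prod>x\<in>V. gf (F x))" .
  show ?thesis unfolding e
    by (rule tp2_prod[OF assms(1)], rule tp2_gf_small) (auto simp: F_def split: if_splits)
qed

definition B2 :: "'a \<Rightarrow> 'a set \<Rightarrow> 'a set set" where
  "B2 a P = {X. X \<subseteq> insert a P \<and> a \<in> X \<and> X \<noteq> {a}}"

lemma tp2_B1:
  assumes "finite P"
  shows "tp2 (coeff (gf {X. X \<subseteq> insert a P \<and> a \<in> X}))"
proof -
  have "{X. X \<subseteq> insert a P \<and> a \<in> X} = {D. {a} \<subseteq> D \<and> D \<subseteq> insert a P}" by auto
  then show ?thesis using tp2_sandwich[of "insert a P" "{a}"] assms by simp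
qed

lemma tp2_B2:
  assumes "finite P"
  shows "tp2 (coeff (gf (B2 a P)))"
proof -
  define F where "F = {X. X \<subseteq> insert a P \<and> a \<in> X}"
  have fF: "finite F" unfolding F_def using assms by simp
  have fB: "finite (B2 a P)" unfolding B2_def using assms by simp
  have t: "tp2 (coeff (gf F))" unfolding F_def by (rule tp2_B1[OF assms])
  have "tp2 (\<lambda>i. if i = 1 then 0 else coeff (gf F) i)"
  proof (rule tp2_zero_low[OF t])
    fix i :: nat assume "i < 1"
    have e: "{X\<in>F. card X = i} = {}"
    proof (rule ccontr)
      assume "{X\<in>F. card X = i} \<noteq> {}"
      then obtain X where X: "X \<subseteq> insert a P" "a \<in> X" "card X = 0" using \<open>i<1\<close> unfolding F_def by auto
      have "finite X" using X(1) assms by (meson finite_insert finite_subset)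
      then show False using X by simp
    qed
    show "coeff (gf F) i = 0" unfolding coeff_gf[OF fF] e by simp
  qed
  moreover have "coeff (gf (B2 a P)) = (\<lambda>i. if i = 1 then 0 else coeff (gf F) i)"
  proof
    fix i
    show "coeff (gf (B2 a P)) i = (if i = 1 then 0 else coeff (gf F) i)"
    proof (cases "i = 1")
      case True
      have e: "{X\<in>B2 a P. card X = i} = {}" using True unfolding B2_def
        by (auto simp: card_Suc_eq)
      show ?thesis unfolding coeff_gf[OF fB] e using True by simp
    next
      case False
      have "{X\<in>B2 a P. card X = i} = {X\<in>F. card X = i}" using False unfolding B2_def F_def
        by auto
      then show ?thesis using coeff_gf[OF fB] coeff_gf[OF fF] False by simp
    qed
  qed
  ultimately show ?thesis by simp
qed

lemma unimodal_via_gf: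
  assumes "finite V" "{D. total_dominating V adj D} = S" "tp2 (coeff (gf S))"
  shows "unimodal (total_dom_poly V adj)"
proof (rule tp2_unimodal)
  have fS: "finite S" using assms(1,2) unfolding total_dominating_def
    by (metis (no_types, lifting) Collect_mono finite_Collect_subsets rev_finite_subset)
  have "real (coeff (total_dom_poly V adj) i) = coeff (gf S) i" for i
  proof -
    have c: "coeff (total_dom_poly V adj) i = (if i \<le> card V then d_t V adj i else 0)"
      unfolding total_dom_poly_def by (simp add: coeff_sum coeff_monom)
    have "coeff (total_dom_poly V adj) i = d_t V adj i"
    proof (cases "i \<le> card V")
      case False
      have e: "{D. total_dominating V adj D \<and> card D = i} = {}"
        using False assms(1) unfolding total_dominating_def by (auto dest: card_mono)
      show ?thesis unfolding c d_t_def e using False by simp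
    qed (use c in simp)
    moreover have "{X\<in>S. card X = i} = {D. total_dominating V adj D \<and> card D = i}"
      using assms(2) by auto
    ultimately show ?thesis using coeff_gf[OF fS] unfolding d_t_def by simp
  qed
  then show "tp2 (\<lambda>i. real (coeff (total_dom_poly V adj) i))" using assms(3)
    by (metis ext)
qed



lemma helm_V_eq: "helm_V n = {Hub} \<union> Rim ` {..<n} \<union> (\<lambda>i. Pend i 0) ` {..<n}"
  unfolding helm_V_def by auto

lemma helm_unimodal:
  assumes "n \<ge> 3"
  shows "unimodal (total_dom_poly (helm_V n) (helm_adj n))"
proof (rule unimodal_via_gf)
  show fin: "finite (helm_V n)" unfolding helm_V_eq by simp
  show "{D. total_dominating (helm_V n) (helm_adj n) D} = {D. Rim ` {..<n} \<subseteq> D \<and> D \<subseteq> helm_V n}"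
  proof (intro set_eqI iffI; simp)
    fix D assume td: "total_dominating (helm_V n) (helm_adj n) D"
    have "Rim i \<in> D" if "i < n" for i
    proof -
      have "Pend i 0 \<in> helm_V n" using that unfolding helm_V_eq by auto
      then obtain u where "u \<in> D" "helm_adj n (Pend i 0) u" using td unfolding total_dominating_def by blast
      then show ?thesis by (cases u) auto
    qed
    then show "Rim ` {..<n} \<subseteq> D \<and> D \<subseteq> helm_V n" using td unfolding total_dominating_def by auto
  next
    fix D assume D: "Rim ` {..<n} \<subseteq> D \<and> D \<subseteq> helm_V n"
    have "\<exists>u\<in>D. helm_adj n x u" if x: "x \<in> helm_V n" for x
    proof -
      consider "x = Hub" | i where "i < n" "x = Rim i" | i where "i < n" "x = Pend i 0"
        using x unfolding helm_V_eq by auto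
      then show ?thesis
      proof cases
        case 1 then show ?thesis using D assms by (intro bexI[of _ "Rim 0"]) auto
      next
        case (2 i) then show ?thesis using D assms by (intro bexI[of _ "Rim (Suc i mod n)"]) auto
      next
        case (3 i) then show ?thesis using D assms by (intro bexI[of _ "Rim i"]) auto
      qed
    qed
    then show "total_dominating (helm_V n) (helm_adj n) D" using D unfolding total_dominating_def by auto
  qed
  show "tp2 (coeff (gf {D. Rim ` {..<n} \<subseteq> D \<and> D \<subseteq> helm_V n}))"
    by (rule tp2_sandwich[OF fin]) (auto simp: helm_V_def)
qed

lemma gen_helm_V_eq: "gen_helm_V n m = {Hub} \<union> Rim ` {..<n} \<union> (\<lambda>(i,j). Pend i j) ` ({..<n} \<times> {..<m})"
  unfolding gen_helm_V_def by auto

lemma gen_helm_unimodal: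
  assumes "n \<ge> 3" "m \<ge> 1"
  shows "unimodal (total_dom_poly (gen_helm_V n m) (gen_helm_adj n m))"
proof (rule unimodal_via_gf)
  show fin: "finite (gen_helm_V n m)" unfolding gen_helm_V_eq by simp
  show "{D. total_dominating (gen_helm_V n m) (gen_helm_adj n m) D} = {D. Rim ` {..<n} \<subseteq> D \<and> D \<subseteq> gen_helm_V n m}"
  proof (intro set_eqI iffI; simp)
    fix D assume td: "total_dominating (gen_helm_V n m) (gen_helm_adj n m) D"
    have "Rim i \<in> D" if "i < n" for i
    proof -
      have "Pend i 0 \<in> gen_helm_V n m" using that assms unfolding gen_helm_V_def by auto
      then obtain u where "u \<in> D" "gen_helm_adj n m (Pend i 0) u" using td unfolding total_dominating_def by blast
      then show ?thesis by (cases u) auto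
    qed
    then show "Rim ` {..<n} \<subseteq> D \<and> D \<subseteq> gen_helm_V n m" using td unfolding total_dominating_def by auto
  next
    fix D assume D: "Rim ` {..<n} \<subseteq> D \<and> D \<subseteq> gen_helm_V n m"
    have "\<exists>u\<in>D. gen_helm_adj n m x u" if x: "x \<in> gen_helm_V n m" for x
    proof -
      consider "x = Hub" | i where "i < n" "x = Rim i" | i j where "i < n" "j < m" "x = Pend i j"
        using x unfolding gen_helm_V_def by auto
      then show ?thesis
      proof cases
        case 1 then show ?thesis using D assms by (intro bexI[of _ "Rim 0"]) auto
      next
        case (2 i) then show ?thesis using D assms by (intro bexI[of _ "Rim (Suc i mod n)"]) auto
      next
        case (3 i j) then show ?thesis using D assms by (intro bexI[of _ "Rim i"]) auto
      qed
    qed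
    then show "total_dominating (gen_helm_V n m) (gen_helm_adj n m) D" using D unfolding total_dominating_def by auto
  qed
  show "tp2 (coeff (gf {D. Rim ` {..<n} \<subseteq> D \<and> D \<subseteq> gen_helm_V n m}))"
    by (rule tp2_sandwich[OF fin]) (auto simp: gen_helm_V_def)
qed



lemma P3_unimodal:
  fixes V :: "'a set"
  assumes "simple_graph V adj"
  shows "unimodal (total_dom_poly (P3_V V) (P3_adj V adj))"
proof -
  define U where "U = (\<lambda>v::'a. {(v,0::nat),(v,1),(v,2)})"
  define F where "F = (\<lambda>v::'a. B2 (v,1::nat) {(v,0),(v,2)})"
  have fV: "finite V" using assms unfolding simple_graph_def by simp
  have UV: "P3_V V = (\<Union>v\<in>V. U v)" unfolding P3_V_def U_def by auto
  have set: "{D. total_dominating (P3_V V) (P3_adj V adj) D}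
       = {D. D \<subseteq> (\<Union>v\<in>V. U v) \<and> (\<forall>v\<in>V. D \<inter> U v \<in> F v)}"
  proof (intro set_eqI iffI; simp)
    fix D assume td: "total_dominating (P3_V V) (P3_adj V adj) D"
    have sub: "D \<subseteq> (\<Union>v\<in>V. U v)" using td UV unfolding total_dominating_def by auto
    have "D \<inter> U v \<in> F v" if v: "v \<in> V" for v
    proof -
      have "(v,2) \<in> P3_V V" "(v,1) \<in> P3_V V" using v unfolding P3_V_def by auto
      then obtain u w where uw: "u \<in> D" "P3_adj V adj (v,2) u" "w \<in> D" "P3_adj V adj (v,1) w"
        using td unfolding total_dominating_def by meson
      obtain u1 u2 where uu: "u = (u1,u2)" by (cases u)
      obtain w1 w2 where ww: "w = (w1,w2)" by (cases w)
      have "u = (v,1)" using uw(2) unfolding uu P3_adj_def by simp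
      moreover have "w1 = v" "w2 = 0 \<or> w2 = 2" using uw(4) unfolding ww P3_adj_def by auto
      ultimately have "(v,1) \<in> D" "w \<in> D \<inter> U v" "w \<noteq> (v,1)"
        using uw unfolding U_def ww by auto
      have "D \<inter> U v \<subseteq> insert (v,1) {(v,0),(v,2)}" unfolding U_def by auto
      moreover have "(v,1) \<in> D \<inter> U v" using \<open>(v,1) \<in> D\<close> unfolding U_def by auto
      moreover have "D \<inter> U v \<noteq> {(v,1)}" using \<open>w \<in> D \<inter> U v\<close> \<open>w \<noteq> (v,1)\<close> by blast
      ultimately show ?thesis unfolding F_def B2_def by simp
    qed
    then show "D \<subseteq> (\<Union>v\<in>V. U v) \<and> (\<forall>v\<in>V. D \<inter> U v \<in> F v)" using sub by auto
  next
    fix D assume D: "D \<subseteq> (\<Union>v\<in>V. U v) \<and> (\<forall>v\<in>V. D \<inter> U v \<in> F v)"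
    have "\<exists>u\<in>D. P3_adj V adj x u" if x: "x \<in> P3_V V" for x
    proof -
      obtain v s where vs: "x = (v,s)" "v \<in> V" "s \<in> {0,1,2}" using x unfolding P3_V_def by auto
      have B: "D \<inter> U v \<in> F v" using D vs by auto
      then have B': "(v,1) \<in> D \<inter> U v" "D \<inter> U v \<noteq> {(v,1)}" unfolding F_def B2_def by simp_all
      then have v1: "(v,1) \<in> D" by blast
      obtain w where w: "w \<in> D" "w = (v,0) \<or> w = (v,2)"
      proof -
        from B' have "\<exists>w\<in>D \<inter> U v. w \<noteq> (v,1)" by blast
        then show ?thesis using that unfolding U_def by auto
      qed
      show ?thesis
      proof (cases "s = 1")
        case True
        then show ?thesis using w vs unfolding P3_adj_def by (intro bexI[of _ w]) auto
      next
        case False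
        then show ?thesis using v1 vs unfolding P3_adj_def by (intro bexI[of _ "(v,1)"]) auto
      qed
    qed
    then show "total_dominating (P3_V V) (P3_adj V adj) D" using D UV unfolding total_dominating_def by auto
  qed
  have g: "gf {D. D \<subseteq> (\<Union>v\<in>V. U v) \<and> (\<forall>v\<in>V. D \<inter> U v \<in> F v)} = (\<Prod>v\<in>V. gf (F v))"
    by (rule gf_blocks[OF fV]) (auto simp: U_def F_def B2_def)
  show ?thesis
  proof (rule unimodal_via_gf[OF _ set])
    show "finite (P3_V V)" using fV unfolding P3_V_def by simp
    show "tp2 (coeff (gf {D. D \<subseteq> (\<Union>v\<in>V. U v) \<and> (\<forall>v\<in>V. D \<inter> U v \<in> F v)}))"
    proof -
      have "tp2 (coeff (\<Prod>v\<in>V. gf (F v)))" by (rule tp2_prod[OF fV]) (simp add: F_def tp2_B2)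
      then show ?thesis using g by simp
    qed
  qed
qed



lemma sunlike_unimodal:
  fixes V :: "'b set" and k :: "'b \<Rightarrow> nat"
  assumes sg: "simple_graph V adj" and kpos: "\<forall>v\<in>V. k v \<ge> 1"
  shows "unimodal (total_dom_poly (sunlike_V V k) (sunlike_adj V adj k))"
proof -
  define P where "P = (\<lambda>v::'b. (Inr ` ({v} \<times> {..<k v})) :: ('b + 'b \<times> nat) set)"
  define U where "U = (\<lambda>v::'b. insert (Inl v) (P v))"
  define F where "F = (\<lambda>v::'b. if (\<exists>u. adj v u) then {X. X \<subseteq> insert (Inl v) (P v) \<and> Inl v \<in> X}
                          else B2 (Inl v) (P v))"
  have fV: "finite V" using sg unfolding simple_graph_def by simp
  have UV: "sunlike_V V k = (\<Union>v\<in>V. U v)" unfolding sunlike_V_def U_def P_def by auto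
  have set: "{D. total_dominating (sunlike_V V k) (sunlike_adj V adj k) D}
       = {D. D \<subseteq> (\<Union>v\<in>V. U v) \<and> (\<forall>v\<in>V. D \<inter> U v \<in> F v)}"
  proof (intro set_eqI iffI; simp)
    fix D assume td: "total_dominating (sunlike_V V k) (sunlike_adj V adj k) D"
    have sub: "D \<subseteq> (\<Union>v\<in>V. U v)" using td UV unfolding total_dominating_def by auto
    have "D \<inter> U v \<in> F v" if v: "v \<in> V" for v
    proof -
      have "Inr (v,0) \<in> sunlike_V V k" using v kpos unfolding sunlike_V_def by auto
      then obtain u where u: "u \<in> D" "sunlike_adj V adj k (Inr (v,0)) u"
        using td unfolding total_dominating_def by meson
      have "u = Inl v"
      proof (cases u)
        case (Inl w) then show ?thesis using u by auto
      next
        case (Inr w) then show ?thesis using u by (cases w) auto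
      qed
      then have iv: "Inl v \<in> D \<inter> U v" using u unfolding U_def by auto
      have sb: "D \<inter> U v \<subseteq> insert (Inl v) (P v)" unfolding U_def by auto
      show ?thesis
      proof (cases "\<exists>u. adj v u")
        case True then show ?thesis using iv sb unfolding F_def by auto
      next
        case False
        have "Inl v \<in> sunlike_V V k" using v unfolding sunlike_V_def by auto
        then obtain w where w: "w \<in> D" "sunlike_adj V adj k (Inl v) w"
          using td unfolding total_dominating_def by meson
        have "w \<in> P v"
        proof (cases w)
          case (Inl x) then show ?thesis using w False by auto
        next
          case (Inr y) then show ?thesis using w unfolding P_def by (cases y) auto
        qed
        then have "w \<in> D \<inter> U v" "w \<noteq> Inl v" using w unfolding U_def P_def by auto
        then have "D \<inter> U v \<noteq> {Inl v}" by blast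
        then show ?thesis using iv sb False unfolding F_def B2_def by simp
      qed
    qed
    then show "D \<subseteq> (\<Union>v\<in>V. U v) \<and> (\<forall>v\<in>V. D \<inter> U v \<in> F v)" using sub by auto
  next
    fix D assume D: "D \<subseteq> (\<Union>v\<in>V. U v) \<and> (\<forall>v\<in>V. D \<inter> U v \<in> F v)"
    have inl: "Inl v \<in> D" if "v \<in> V" for v
    proof -
      have "D \<inter> U v \<in> F v" using D that by auto
      then have "Inl v \<in> D \<inter> U v" unfolding F_def B2_def by (simp split: if_splits)
      then show ?thesis by blast
    qed
    have "\<exists>u\<in>D. sunlike_adj V adj k x u" if x: "x \<in> sunlike_V V k" for x
    proof -
      consider v where "v \<in> V" "x = Inl v" | v j where "v \<in> V" "j < k v" "x = Inr (v,j)"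
        using x unfolding sunlike_V_def by auto
      then show ?thesis
      proof cases
        case (1 v)
        show ?thesis
        proof (cases "\<exists>u. adj v u")
          case True
          then obtain u where "adj v u" by blast
          then have "u \<in> V" using sg unfolding simple_graph_def by blast
          then show ?thesis using inl \<open>adj v u\<close> 1 by (intro bexI[of _ "Inl u"]) auto
        next
          case False
          have "D \<inter> U v \<in> B2 (Inl v) (P v)" proof -
            have "D \<inter> U v \<in> F v" using D 1 by auto
            then show ?thesis using False unfolding F_def by simp
          qed
          then have h: "D \<inter> U v \<subseteq> insert (Inl v) (P v)" "D \<inter> U v \<noteq> {Inl v}" "Inl v \<in> D \<inter> U v"
            unfolding B2_def by simp_all
          then obtain y where "y \<in> D \<inter> U v" "y \<noteq> Inl v" by blast
          then have "y \<in> D" "y \<in> P v" unfolding U_def by auto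
          then obtain j where "j < k v" "y = Inr (v,j)" unfolding P_def by auto
          then show ?thesis using \<open>y \<in> D\<close> 1 by (intro bexI[of _ y]) auto
        qed
      next
        case (2 v j) then show ?thesis using inl by (intro bexI[of _ "Inl v"]) auto
      qed
    qed
    then show "total_dominating (sunlike_V V k) (sunlike_adj V adj k) D" using D UV unfolding total_dominating_def by auto
  qed
  have g: "gf {D. D \<subseteq> (\<Union>v\<in>V. U v) \<and> (\<forall>v\<in>V. D \<inter> U v \<in> F v)} = (\<Prod>v\<in>V. gf (F v))"
    by (rule gf_blocks[OF fV]) (auto simp: U_def F_def B2_def P_def)
  show ?thesis
  proof (rule unimodal_via_gf[OF _ set])
    show "finite (sunlike_V V k)" unfolding UV U_def P_def using fV by simp
    show "tp2 (coeff (gf {D. D \<subseteq> (\<Union>v\<in>V. U v) \<and> (\<forall>v\<in>V. D \<inter> U v \<in> F v)}))"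
    proof -
      have "tp2 (coeff (\<Prod>v\<in>V. gf (F v)))"
        by (rule tp2_prod[OF fV]) (simp add: F_def tp2_B2 tp2_B1 P_def)
      then show ?thesis using g by simp
    qed
  qed
qed


theorem mainTheorem11:
  shows "(\<forall>n\<ge>3. unimodal (total_dom_poly (helm_V n) (helm_adj n)))
    \<and> (\<forall>n m. n \<ge> 3 \<and> m \<ge> 1 \<longrightarrow> unimodal (total_dom_poly (gen_helm_V n m) (gen_helm_adj n m)))
    \<and> (\<forall>(V :: 'a set) adj. simple_graph V adj \<longrightarrow>
         unimodal (total_dom_poly (P3_V V) (P3_adj V adj)))
    \<and> (\<forall>(V :: 'b set) adj k. simple_graph V adj \<and> (\<forall>v\<in>V. k v \<ge> 1) \<longrightarrow>
         unimodal (total_dom_poly (sunlike_V V k) (sunlike_adj V adj k)))"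
  using helm_unimodal gen_helm_unimodal P3_unimodal sunlike_unimodal by blast

end
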